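(* Neither $\mathcal{L}_{ME}=\{(M,q)\mid ME[U](M)>q\}$ nor $\mathcal{L}_{GE}=\{(M,q)\mid GE[U](M)>q\}$ is a $k$-observable hyperproperty, for any positive integer $k$.
   Context: Stores map variables to values; $H$ is the high input variable and $O$ the low output variable. A trace is a sequence of stores. For a finite trace $t$, $t\circ t'$ is concatenation. A program is a set $M$ of infinite traces that is deterministic (two traces with the same initial value of $H$ are equal) and has a finite nonempty input domain $\mathbb{H}_M=\{\sigma_0(H)\}$. Input domains are unbounded in size. $M(h)$ is the output trace $(\sigma_1(O),\sigma_2(O),\dots)$ of the trace of $M$ starting with $H=h$. $\bot$ denotes termination. $M(h)=o$ means that for all $i$, $o_i=\bot$ or $M(h)_i=\bot$ or $M(h)_i=o_i$. For a distribution $\mu$ on $\mathbb{H}_M$, $\mu(O=o)=\sum_{h:M(h)=o}\mu(H=h)$, with conditional probabilities induced accordingly. $U$ is the uniform distribution on $\mathbb{H}_M$. Min-entropy QIF (log base 2): $\mathcal{V}[\mu](X)=\max_x\mu(X=x)$, $\mathcal{V}[\mu](X|Y)=\sum_y\mu(Y=y)\max_x\mu(X=x|Y=y)$, and $ME[\mu](M)=\log\frac1{\mathcal{V}[\mu](H)}-\log\frac1{\mathcal{V}[\mu](H|O)}$. Guessing-entropy QIF: $\mathcal{G}[\mu](X)=\sum_i i\,\mu(X=x_i)$ with the $x_i$ ordered by non-increasing probability; $\mathcal{G}[\mu](X|Y)=\sum_y\mu(Y=y)\sum_i i\,\mu(X=x_i|Y=y)$ with the analogous ordering for each $y$; and $GE[\mu](M)=\mathcal{G}[\mu](H)-\mathcal{G}[\mu](H|O)$.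 $\mathit{Prop}$ is the set of programs; $\mathit{Obs}$ is the set of deterministic finite sets of finite traces. For $S\in\mathit{Obs}$ and $T\in\mathit{Prop}$, $S\le T$ iff every $t\in S$ has some $t'$ with $t\circ t'\in T$. $P\subseteq\mathit{Prop}$ is $k$-observable iff for every $S\in P$ there is $T\in\mathit{Obs}$ with $T\le S$ and $|T|\le k$ such that every $S'\in\mathit{Prop}$ with $T\le S'$ is in $P$. A set $\mathcal{P}$ of pairs (program, rational) is $k$-observable iff $\{M\mid(M,q)\in\mathcal{P}\}$ is $k$-observable for every rational $q$, with the same $k$ for all $q$. *)

theory Defs
  imports Complex_Main "HOL-Library.Multiset"
begin

text \<open>Values: an unbounded (infinite) value domain; None plays the role of the
  termination marker bottom.\<close>
type_synonym val = "nat option"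

datatype var = HVar | OVar | Other nat

type_synonym store = "var \<Rightarrow> val"
type_synonym itrace = "nat \<Rightarrow> store"
type_synonym ftrace = "store list"

definition conc :: "ftrace \<Rightarrow> itrace \<Rightarrow> itrace" where
  "conc t t' = (\<lambda>i. if i < length t then t ! i else t' (i - length t))"

definition input_dom :: "itrace set \<Rightarrow> val set" where
  "input_dom M = {t 0 HVar | t. t \<in> M}"

definition Prop :: "itrace set set" where
  "Prop = {M. (\<forall>t\<in>M. \<forall>t'\<in>M. t 0 HVar = t' 0 HVar \<longrightarrow> t = t')
              \<and> finite (input_dom M) \<and> input_dom M \<noteq> {}}"

text \<open>Output trace M(h) = (sigma_1(O), sigma_2(O), ...).\<close>
definition out :: "itrace set \<Rightarrow> val \<Rightarrow> (nat \<Rightarrow> val)" where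
  "out M h = (\<lambda>i. (THE t. t \<in> M \<and> t 0 HVar = h) (Suc i) OVar)"

text \<open>The relation M(h) = o (equality up to termination).\<close>
definition out_is :: "itrace set \<Rightarrow> val \<Rightarrow> (nat \<Rightarrow> val) \<Rightarrow> bool" where
  "out_is M h ot \<longleftrightarrow> (\<forall>i. ot i = None \<or> out M h i = None \<or> out M h i = ot i)"

definition outs :: "itrace set \<Rightarrow> (nat \<Rightarrow> val) set" where
  "outs M = out M ` input_dom M"

definition unif :: "itrace set \<Rightarrow> val \<Rightarrow> real" where
  "unif M h = (if h \<in> input_dom M then 1 / real (card (input_dom M)) else 0)"

definition probO :: "(val \<Rightarrow> real) \<Rightarrow> itrace set \<Rightarrow> (nat \<Rightarrow> val) \<Rightarrow> real" where
  "probO \<mu> M ot = (\<Sum>h\<in>{h\<in>input_dom M. out_is M h ot}. \<mu> h)"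

definition probH_given_O :: "(val \<Rightarrow> real) \<Rightarrow> itrace set \<Rightarrow> val \<Rightarrow> (nat \<Rightarrow> val) \<Rightarrow> real" where
  "probH_given_O \<mu> M h ot = (if out_is M h ot then \<mu> h else 0) / probO \<mu> M ot"

definition vuln :: "(val \<Rightarrow> real) \<Rightarrow> itrace set \<Rightarrow> real" where
  "vuln \<mu> M = Max (\<mu> ` input_dom M)"

definition cond_vuln :: "(val \<Rightarrow> real) \<Rightarrow> itrace set \<Rightarrow> real" where
  "cond_vuln \<mu> M = (\<Sum>ot\<in>outs M. probO \<mu> M ot * Max ((\<lambda>h. probH_given_O \<mu> M h ot) ` input_dom M))"

definition ME :: "(val \<Rightarrow> real) \<Rightarrow> itrace set \<Rightarrow> real" where
  "ME \<mu> M = log 2 (1 / vuln \<mu> M) - log 2 (1 / cond_vuln \<mu> M)"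

definition guess :: "('a \<Rightarrow> real) \<Rightarrow> 'a set \<Rightarrow> real" where
  "guess p A = (let ps = rev (sorted_list_of_multiset (image_mset p (mset_set A)))
                in (\<Sum>i<length ps. real (Suc i) * ps ! i))"

definition guessH :: "(val \<Rightarrow> real) \<Rightarrow> itrace set \<Rightarrow> real" where
  "guessH \<mu> M = guess \<mu> (input_dom M)"

definition cond_guess :: "(val \<Rightarrow> real) \<Rightarrow> itrace set \<Rightarrow> real" where
  "cond_guess \<mu> M = (\<Sum>ot\<in>outs M. probO \<mu> M ot * guess (\<lambda>h. probH_given_O \<mu> M h ot) (input_dom M))"

definition GE :: "(val \<Rightarrow> real) \<Rightarrow> itrace set \<Rightarrow> real" where
  "GE \<mu> M = guessH \<mu> M - cond_guess \<mu> M"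

definition Obs :: "ftrace set set" where
  "Obs = {T. finite T \<and> (\<forall>t\<in>T. \<forall>t'\<in>T. t \<noteq> [] \<and> t' \<noteq> [] \<and> hd t HVar = hd t' HVar \<longrightarrow> t = t')}"

definition obs_le :: "ftrace set \<Rightarrow> itrace set \<Rightarrow> bool" where
  "obs_le S T \<longleftrightarrow> (\<forall>t\<in>S. \<exists>t'. conc t t' \<in> T)"

definition k_observable :: "nat \<Rightarrow> itrace set set \<Rightarrow> bool" where
  "k_observable k P \<longleftrightarrow> P \<subseteq> Prop \<and>
     (\<forall>S\<in>P. \<exists>T\<in>Obs. obs_le T S \<and> card T \<le> k \<and>
        (\<forall>S'\<in>Prop. obs_le T S' \<longrightarrow> S' \<in> P))"

definition k_observable_pairs :: "nat \<Rightarrow> (itrace set \<times> rat) set \<Rightarrow> bool" where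
  "k_observable_pairs k \<P> \<longleftrightarrow> (\<forall>q. k_observable k {M. (M, q) \<in> \<P>})"

definition L_ME :: "(itrace set \<times> rat) set" where
  "L_ME = {(M, q). M \<in> Prop \<and> ME (unif M) M > real_of_rat q}"

definition L_GE :: "(itrace set \<times> rat) set" where
  "L_GE = {(M, q). M \<in> Prop \<and> GE (unif M) M > real_of_rat q}"

end

theory Submission
  imports Defs
begin

lemma guess_const:
  assumes "finite A"
  shows "guess (\<lambda>_. c) A = c * real (card A) * (real (card A) + 1) / 2"
proof -
  have m: "image_mset (\<lambda>_. c) (mset_set A) = mset (replicate (card A) c)"
    by (simp add: image_mset_const_eq)
  have s: "\<And>n. (\<Sum>i<n. real (Suc i) * c) = c * real n * (real n + 1) / 2"
  proof -
    fix n show "(\<Sum>i<n. real (Suc i) * c) = c * real n * (real n + 1) / 2"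
      by (induction n) (simp_all add: algebra_simps)
  qed
  have r: "rev (sorted_list_of_multiset (image_mset (\<lambda>_. c) (mset_set A))) = replicate (card A) c"
    by (simp only: m sorted_list_of_multiset_mset sorted_sort_id sorted_replicate) simp
  show ?thesis unfolding guess_def Let_def r using s[of "card A"] by simp
qed

lemma guess_ind:
  assumes "finite A" "a \<in> A" "\<forall>x\<in>A. p x = (if x = a then 1 else 0)"
  shows "guess p A = 1"
proof -
  have A: "A = insert a (A - {a})" using assms by blast
  have "mset_set A = add_mset a (mset_set (A - {a}))"
    using mset_set.insert_remove[of "A - {a}" a] assms(1) A by simp
  then have "image_mset p (mset_set A) = add_mset 1 (image_mset p (mset_set (A - {a})))"
    using assms by simp
  also have "image_mset p (mset_set (A - {a})) = image_mset (\<lambda>_. 0) (mset_set (A - {a}))"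
    using assms(1,3) by (intro image_mset_cong) simp
  finally have eq: "image_mset p (mset_set A) = mset (replicate (card (A - {a})) 0 @ [1])"
    using assms(1) by (simp add: image_mset_const_eq)
  moreover have "sort (replicate (card (A - {a})) (0::real) @ [1]) = replicate (card (A - {a})) 0 @ [1]"
    by (rule sorted_sort_id) (simp add: sorted_append)
  ultimately have "rev (sorted_list_of_multiset (image_mset p (mset_set A))) = 1 # replicate (card (A - {a})) 0"
    by (simp only: eq sorted_list_of_multiset_mset) simp
  then show ?thesis unfolding guess_def Let_def
    by (simp add: sum.lessThan_Suc_shift del: sum.lessThan_Suc)
qed

lemma guess_cong:
  assumes "finite A" "\<forall>x\<in>A. p x = q x"
  shows "guess p A = guess q A"
proof -
  have "image_mset p (mset_set A) = image_mset q (mset_set A)"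
    using assms by (intro image_mset_cong) simp
  then show ?thesis unfolding guess_def by simp
qed

lemma sep_values:
  assumes MP: "M \<in> Prop"
    and sep: "\<forall>h\<in>input_dom M. \<forall>h'\<in>input_dom M. out_is M h (out M h') \<longleftrightarrow> h = h'"
  shows "ME (unif M) M = log 2 (card (input_dom M)) \<and>
         GE (unif M) M = (real (card (input_dom M)) - 1) / 2"
proof -
  define D where "D = input_dom M"
  define n where "n = card D"
  have fin: "finite D" and ne: "D \<noteq> {}" using MP unfolding Prop_def D_def by auto
  have npos: "n > 0" using fin ne n_def by (simp add: card_gt_0_iff)
  have rfl: "\<And>h. out_is M h (out M h)" unfolding out_is_def by simp
  have inj: "inj_on (out M) D"
  proof (rule inj_onI)
    fix h h' assume "h \<in> D" "h' \<in> D" "out M h = out M h'"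
    then show "h = h'" using sep rfl[of h] unfolding D_def by metis
  qed
  have u: "\<And>h. h \<in> D \<Longrightarrow> unif M h = 1 / real n"
    unfolding unif_def D_def n_def by simp
  have pO: "probO (unif M) M (out M h') = 1 / real n" if "h' \<in> D" for h'
  proof -
    have "{h\<in>input_dom M. out_is M h (out M h')} = {h'}"
      using sep that rfl[of h'] unfolding D_def by auto
    then show ?thesis unfolding probO_def using u that by simp
  qed
  have pc: "probH_given_O (unif M) M h (out M h') = (if h = h' then 1 else 0)"
    if "h' \<in> D" "h \<in> D" for h h'
    using that pO[OF that(1)] u[OF that(2)] sep npos unfolding probH_given_O_def D_def
    by auto
  have v: "vuln (unif M) M = 1 / real n"
  proof -
    have "unif M ` input_dom M = {1 / real n}" using u ne unfolding D_def by auto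
    then show ?thesis unfolding vuln_def by simp
  qed
  have mx: "Max ((\<lambda>h. probH_given_O (unif M) M h (out M h')) ` input_dom M) = 1"
    if "h' \<in> D" for h'
  proof (rule Max_eqI)
    show "finite ((\<lambda>h. probH_given_O (unif M) M h (out M h')) ` input_dom M)"
      using fin unfolding D_def by simp
    show "y \<le> 1" if "y \<in> (\<lambda>h. probH_given_O (unif M) M h (out M h')) ` input_dom M" for y
      using that pc[OF \<open>h' \<in> D\<close>] unfolding D_def by auto
    show "1 \<in> (\<lambda>h. probH_given_O (unif M) M h (out M h')) ` input_dom M"
      using pc[OF that that] that unfolding D_def by force
  qed
  have cv: "cond_vuln (unif M) M = 1"
  proof -
    have "cond_vuln (unif M) M = (\<Sum>h'\<in>D. probO (unif M) M (out M h') *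
        Max ((\<lambda>h. probH_given_O (unif M) M h (out M h')) ` input_dom M))"
      unfolding cond_vuln_def outs_def D_def[symmetric] using inj by (simp add: sum.reindex)
    also have "\<dots> = (\<Sum>h'\<in>D. 1 / real n)" using pO mx by simp
    also have "\<dots> = 1" using npos n_def by simp
    finally show ?thesis .
  qed
  have gH: "guessH (unif M) M = (real n + 1) / 2"
  proof -
    have "guessH (unif M) M = guess (\<lambda>_. 1 / real n) D"
      unfolding guessH_def D_def[symmetric] using fin u by (intro guess_cong) auto
    also have "\<dots> = (real n + 1) / 2" using guess_const[OF fin] npos n_def by simp
    finally show ?thesis .
  qed
  have cg: "cond_guess (unif M) M = 1"
  proof -
    have "cond_guess (unif M) M = (\<Sum>h'\<in>D. probO (unif M) M (out M h') *
        guess (\<lambda>h. probH_given_O (unif M) M h (out M h')) D)"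
      unfolding cond_guess_def outs_def D_def[symmetric] using inj by (simp add: sum.reindex)
    also have "\<dots> = (\<Sum>h'\<in>D. 1 / real n)"
  proof (rule sum.cong[OF HOL.refl])
      fix h' assume h': "h' \<in> D"
      have "guess (\<lambda>h. probH_given_O (unif M) M h (out M h')) D = 1"
        using fin h' pc[OF h'] by (intro guess_ind) auto
      then show "probO (unif M) M (out M h') *
            guess (\<lambda>h. probH_given_O (unif M) M h (out M h')) D = 1 / real n"
        using pO[OF h'] by simp
    qed
    also have "\<dots> = 1" using npos n_def by simp
    finally show ?thesis .
  qed
  show ?thesis unfolding ME_def GE_def using v cv gH cg npos
    by (simp add: D_def[symmetric] n_def[symmetric] log_divide)
qed

definition sepP :: "itrace set \<Rightarrow> bool" where
  "sepP M \<longleftrightarrow> (\<forall>h\<in>input_dom M. \<forall>h'\<in>input_dom M. out_is M h (out M h') \<longleftrightarrow> h = h')"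

lemma out_sub:
  assumes "W \<in> Prop" "M' \<subseteq> W" "h \<in> input_dom M'"
  shows "out M' h = out W h"
proof -
  obtain t where t: "t \<in> M'" "t 0 HVar = h" using assms(3) unfolding input_dom_def by auto
  have det: "\<And>s. s \<in> W \<Longrightarrow> s 0 HVar = h \<Longrightarrow> s = t"
    using assms(1,2) t unfolding Prop_def by auto
  have "(THE s. s \<in> M' \<and> s 0 HVar = h) = t"
    using t det assms(2) by (intro the_equality) auto
  moreover have "(THE s. s \<in> W \<and> s 0 HVar = h) = t"
    using t det assms(2) by (intro the_equality) auto
  ultimately show ?thesis unfolding out_def by simp
qed

lemma sub_prop:
  assumes "W \<in> Prop" "M' \<subseteq> W" "M' \<noteq> {}"
  shows "M' \<in> Prop" "input_dom M' \<subseteq> input_dom W"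
proof -
  show sub: "input_dom M' \<subseteq> input_dom W" using assms(2) unfolding input_dom_def by auto
  have "finite (input_dom M')" using sub assms(1) finite_subset unfolding Prop_def by auto
  moreover have "input_dom M' \<noteq> {}" using assms(3) unfolding input_dom_def by auto
  ultimately show "M' \<in> Prop" using assms(1,2) unfolding Prop_def by auto
qed

lemma sep_sub:
  assumes "W \<in> Prop" "M' \<subseteq> W" "M' \<noteq> {}" "sepP W"
  shows "sepP M'"
proof -
  have "input_dom M' \<subseteq> input_dom W" using sub_prop[OF assms(1-3)] by simp
  moreover have "out_is M' h ot = out_is W h ot" if "h \<in> input_dom M'" for h ot
    unfolding out_is_def using out_sub[OF assms(1,2) that] by simp
  ultimately show ?thesis using assms(4) out_sub[OF assms(1,2)] unfolding sepP_def
    by (metis subsetD)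
qed

lemma card_dom_le:
  assumes "finite M'"
  shows "card (input_dom M') \<le> card M'"
proof -
  have "input_dom M' = (\<lambda>t. t 0 HVar) ` M'" unfolding input_dom_def by auto
  then show ?thesis using card_image_le[OF assms] by simp
qed

lemma restrict:
  assumes "obs_le T W" "finite T" "card T \<le> k" "1 \<le> k" "W \<noteq> {}"
  shows "\<exists>M'\<subseteq>W. M' \<noteq> {} \<and> finite M' \<and> card M' \<le> k \<and> obs_le T M'"
proof (cases "T = {}")
  case True
  obtain w where "w \<in> W" using assms(5) by auto
  then show ?thesis using True assms(4) by (intro exI[of _ "{w}"]) (auto simp: obs_le_def)
next
  case False
  define f where "f t = (SOME s. s \<in> W \<and> (\<exists>t'. conc t t' = s))" for t
  have f: "f t \<in> W \<and> (\<exists>t'. conc t t' = f t)" if "t \<in> T" for t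
    using assms(1) that unfolding obs_le_def f_def by (metis (mono_tags, lifting) someI_ex)
  have "card (f ` T) \<le> k" using card_image_le[OF assms(2), of f] assms(3) by linarith
  moreover have "obs_le T (f ` T)" unfolding obs_le_def using f by blast
  ultimately show ?thesis using False f assms(2) by (intro exI[of _ "f ` T"]) auto
qed

lemma not_kobs:
  fixes F :: "itrace set \<Rightarrow> real" and g :: "nat \<Rightarrow> real"
  assumes "1 \<le> k" and FM: "\<forall>M\<in>Prop. sepP M \<longrightarrow> F M = g (card (input_dom M))"
    and mono: "\<forall>n. 1 \<le> n \<and> n \<le> k \<longrightarrow> g n \<le> r"
    and W: "W \<in> Prop" "sepP W" "F W > r"
  shows "\<not> k_observable k {M. M \<in> Prop \<and> F M > r}"
proof
  assume "k_observable k {M. M \<in> Prop \<and> F M > r}"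
  then obtain T where T: "T \<in> Obs" "obs_le T W" "card T \<le> k"
    and all: "\<forall>S'\<in>Prop. obs_le T S' \<longrightarrow> S' \<in> {M. M \<in> Prop \<and> F M > r}"
    using W unfolding k_observable_def by blast
  have "W \<noteq> {}" using W(1) unfolding Prop_def input_dom_def by auto
  then obtain M' where M': "M' \<subseteq> W" "M' \<noteq> {}" "finite M'" "card M' \<le> k" "obs_le T M'"
    using restrict[OF T(2) _ T(3) assms(1)] T(1) unfolding Obs_def by blast
  have P: "M' \<in> Prop" using sub_prop[OF W(1) M'(1,2)] by simp
  have S: "sepP M'" using sep_sub[OF W(1) M'(1,2) W(2)] .
  have c1: "card (input_dom M') \<le> k" using card_dom_le[OF M'(3)] M'(4) by linarith
  have c2: "1 \<le> card (input_dom M')" using P unfolding Prop_def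
    by (simp add: Suc_leI card_gt_0_iff)
  have "F M' \<le> r" using FM P S mono c1 c2 by auto
  moreover have "F M' > r" using all P M'(5) by auto
  ultimately show False by simp
qed

definition wit :: "nat \<Rightarrow> itrace set" where
  "wit k = (\<lambda>j. (\<lambda>i v. Some j)) ` {..k}"

lemma wit_dom: "input_dom (wit k) = Some ` {..k}"
  unfolding input_dom_def wit_def by auto

lemma wit_prop: "wit k \<in> Prop"
proof -
  have "\<forall>t\<in>wit k. \<forall>t'\<in>wit k. t 0 HVar = t' 0 HVar \<longrightarrow> t = t'"
    unfolding wit_def by auto
  then show ?thesis unfolding Prop_def by (simp add: wit_dom)
qed

lemma wit_out: "j \<le> k \<Longrightarrow> out (wit k) (Some j) = (\<lambda>i. Some j)"
proof -
  assume j: "j \<le> k"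
  have "(THE t. t \<in> wit k \<and> t 0 HVar = Some j) = (\<lambda>i v. Some j)"
    using j by (intro the_equality) (auto simp: wit_def)
  then show ?thesis unfolding out_def by simp
qed

lemma wit_sep: "sepP (wit k)"
  unfolding sepP_def wit_dom using wit_out by (auto simp: out_is_def)

lemma wit_card: "card (input_dom (wit k)) = k + 1"
  unfolding wit_dom by (simp add: card_image)

lemma FME: "\<forall>M\<in>Prop. sepP M \<longrightarrow> ME (unif M) M = log 2 (real (card (input_dom M)))"
  using sep_values unfolding sepP_def by blast
lemma FGE: "\<forall>M\<in>Prop. sepP M \<longrightarrow> GE (unif M) M = (real (card (input_dom M)) - 1) / 2"
  using sep_values unfolding sepP_def by blast

theorem theorem9:
  fixes k :: nat
  assumes "k \<ge> 1"
  shows "\<not> k_observable_pairs k L_ME \<and> \<not> k_observable_pairs k L_GE"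
proof
  have "log 2 (real k) < log 2 (real k + 1)" using assms by simp
  then obtain r where r: "r \<in> \<rat>" "log 2 (real k) < r" "r < log 2 (real k + 1)"
    using Rats_dense_in_real by blast
  then obtain q where q: "r = real_of_rat q" by (auto elim: Rats_cases)
  have "\<not> k_observable k {M. M \<in> Prop \<and> ME (unif M) M > r}"
  proof (rule not_kobs[OF assms FME _ wit_prop wit_sep])
    show "\<forall>n. 1 \<le> n \<and> n \<le> k \<longrightarrow> log 2 (real n) \<le> r"
      using r(2) by (smt (verit) le_log_iff log_le_cancel_iff of_nat_0_less_iff of_nat_le_iff
          less_le_trans zero_less_one)
    show "ME (unif (wit k)) (wit k) > r" using FME wit_prop wit_sep wit_card r(3) by (simp add: add.commute)
  qed
  moreover have "{M. (M, q) \<in> L_ME} = {M. M \<in> Prop \<and> ME (unif M) M > r}"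
    unfolding L_ME_def q by auto
  ultimately have "\<not> k_observable k {M. (M, q) \<in> L_ME}" by simp
  then show "\<not> k_observable_pairs k L_ME" unfolding k_observable_pairs_def by blast
next
  define q :: rat where "q = (of_nat k - 1) / 2"
  define r where "r = (real k - 1) / 2"
  have qr: "real_of_rat q = r" unfolding q_def r_def by (simp add: of_rat_divide of_rat_diff)
  have "\<not> k_observable k {M. M \<in> Prop \<and> GE (unif M) M > r}"
  proof (rule not_kobs[OF assms FGE _ wit_prop wit_sep])
    show "\<forall>n. 1 \<le> n \<and> n \<le> k \<longrightarrow> (real n - 1) / 2 \<le> r"
      unfolding r_def by simp
    show "GE (unif (wit k)) (wit k) > r" using FGE wit_prop wit_sep wit_card unfolding r_def by simp
  qed
  moreover have "{M. (M, q) \<in> L_GE} = {M. M \<in> Prop \<and> GE (unif M) M > r}"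
    unfolding L_GE_def using qr by auto
  ultimately have "\<not> k_observable k {M. (M, q) \<in> L_GE}" by simp
  then show "\<not> k_observable_pairs k L_GE" unfolding k_observable_pairs_def by blast
qed

end
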